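(* Let $X$ be any one of the sequences $F,L,J,j,P,Q$. For integers $a,b,c,d,e$ put $$\Delta=X_{d-a}X_{e-b}-X_{e-a}X_{d-b},\quad \Delta_1=X_{d-c}X_{e-b}-X_{e-c}X_{d-b},\quad \Delta_2=X_{d-a}X_{e-c}-X_{e-a}X_{d-c}.$$ Then for every nonnegative integer $k$ and every integer $m$: if $\Delta_2\neq0$, $$\sum_{r=0}^k\binom kr\left(\frac{\Delta_1}{\Delta_2}\right)^rX_{m-(b-c)k+(b-a)r}=\left(\frac{\Delta}{\Delta_2}\right)^kX_m\quad\text{and}\quad \sum_{r=0}^k\binom kr\left(\frac{-\Delta}{\Delta_2}\right)^rX_{m+(a-b)k+(b-c)r}=\left(\frac{\Delta_1}{-\Delta_2}\right)^kX_m;$$ and if $\Delta_1\neq0$, $$\sum_{r=0}^k\binom kr\left(\frac{-\Delta}{\Delta_1}\right)^rX_{m+(b-a)k+(a-c)r}=\left(\frac{\Delta_2}{-\Delta_1}\right)^kX_m.$$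
   Context: All sequences are indexed by $n\in\mathbb Z$. Fibonacci numbers $F_n$ and Lucas numbers $L_n$: $F_n=F_{n-1}+F_{n-2}$, $L_n=L_{n-1}+L_{n-2}$ for all $n\in\mathbb Z$, with $F_0=0,F_1=1,L_0=2,L_1=1$ (so $F_{-n}=(-1)^{n-1}F_n$, $L_{-n}=(-1)^nL_n$). Jacobsthal numbers $J_n$ and Jacobsthal–Lucas numbers $j_n$: $J_n=J_{n-1}+2J_{n-2}$, $j_n=j_{n-1}+2j_{n-2}$ for all $n\in\mathbb Z$, with $J_0=0,J_1=1,j_0=2,j_1=1$ (so $J_{-n}=(-1)^{n-1}2^{-n}J_n$, $j_{-n}=(-1)^n2^{-n}j_n$, rational for negative index). Pell numbers $P_n$ and Pell–Lucas numbers $Q_n$: $P_n=2P_{n-1}+P_{n-2}$, $Q_n=2Q_{n-1}+Q_{n-2}$ for all $n\in\mathbb Z$, with $P_0=0,P_1=1,Q_0=2,Q_1=2$ (so $P_{-n}=(-1)^{n-1}P_n$, $Q_{-n}=(-1)^nQ_n$). Here $0^0=1$. *)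

theory Defs
  imports Complex_Main
begin

fun fwd_seq :: "real \<Rightarrow> real \<Rightarrow> real \<Rightarrow> real \<Rightarrow> nat \<Rightarrow> real" where
  "fwd_seq p q x0 x1 0 = x0"
| "fwd_seq p q x0 x1 (Suc 0) = x1"
| "fwd_seq p q x0 x1 (Suc (Suc n)) = p * fwd_seq p q x0 x1 (Suc n) + q * fwd_seq p q x0 x1 n"

text \<open>bwd_seq p q x0 x1 n is X_(-n); from X_(k) = p X_(k-1) + q X_(k-2) we get
  X_(-(n+2)) = (X_(-n) - p X_(-(n+1))) / q.\<close>
fun bwd_seq :: "real \<Rightarrow> real \<Rightarrow> real \<Rightarrow> real \<Rightarrow> nat \<Rightarrow> real" where
  "bwd_seq p q x0 x1 0 = x0"
| "bwd_seq p q x0 x1 (Suc 0) = (x1 - p * x0) / q"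
| "bwd_seq p q x0 x1 (Suc (Suc n)) = (bwd_seq p q x0 x1 n - p * bwd_seq p q x0 x1 (Suc n)) / q"

definition lin_seq :: "real \<Rightarrow> real \<Rightarrow> real \<Rightarrow> real \<Rightarrow> int \<Rightarrow> real" where
  "lin_seq p q x0 x1 n = (if 0 \<le> n then fwd_seq p q x0 x1 (nat n) else bwd_seq p q x0 x1 (nat (- n)))"

definition Fib :: "int \<Rightarrow> real" where "Fib = lin_seq 1 1 0 1"
definition Luc :: "int \<Rightarrow> real" where "Luc = lin_seq 1 1 2 1"
definition Jac :: "int \<Rightarrow> real" where "Jac = lin_seq 1 2 0 1"
definition JacL :: "int \<Rightarrow> real" where "JacL = lin_seq 1 2 2 1"
definition Pell :: "int \<Rightarrow> real" where "Pell = lin_seq 2 1 0 1"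
definition PellL :: "int \<Rightarrow> real" where "PellL = lin_seq 2 1 2 2"

end

theory Submission
  imports Defs
begin

definition recur :: "real \<Rightarrow> real \<Rightarrow> (int \<Rightarrow> real) \<Rightarrow> bool" where
  "recur p q Y \<longleftrightarrow> (\<forall>n. Y (n + 2) = p * Y (n + 1) + q * Y n)"

lemma lin_seq_recur:
  assumes q: "q \<noteq> 0"
  shows "recur p q (lin_seq p q x0 x1)"
  unfolding recur_def
proof
  fix n :: int
  show "lin_seq p q x0 x1 (n + 2) = p * lin_seq p q x0 x1 (n + 1) + q * lin_seq p q x0 x1 n"
  proof (cases "n \<ge> 0")
    case True
    then obtain k where k: "n = int k" by (metis nonneg_eq_int)
    have "nat (int k + 2) = Suc (Suc k)" "nat (int k + 1) = Suc k" by auto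
    then show ?thesis using k by (simp add: lin_seq_def)
  next
    case False
    show ?thesis
    proof (cases "n = -1")
      case True
      then show ?thesis using q by (simp add: lin_seq_def field_simps)
    next
      case False2: False
      with False have "n \<le> -2" by auto
      then obtain k where k: "n = - int (Suc (Suc k))" by (intro that[of "nat (-n) - 2"]) (use \<open>n \<le> -2\<close> in simp)
      have e1: "nat (- n) = Suc (Suc k)" using k by simp
      have e2: "n + 2 = - int k" using k by simp
      have e3: "n + 1 = - int (Suc k)" using k by simp
      have "lin_seq p q x0 x1 n = bwd_seq p q x0 x1 (Suc (Suc k))" using k e1 by (simp add: lin_seq_def)
      moreover have "lin_seq p q x0 x1 (n+1) = bwd_seq p q x0 x1 (Suc k)"
      proof -
        have "nat (- n - 1) = Suc k" using k by simp
        then show ?thesis using e3 by (simp add: lin_seq_def)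
      qed
      moreover have "lin_seq p q x0 x1 (n+2) = bwd_seq p q x0 x1 k"
      proof (cases k)
        case 0 then show ?thesis using e2 by (simp add: lin_seq_def)
      next
        case (Suc j)
        have "nat (- n - 2) = k" using k by simp
        then show ?thesis using e2 Suc by (simp add: lin_seq_def)
      qed
      ultimately show ?thesis using q by (simp add: field_simps)
    qed
  qed
qed

lemma recur_unique:
  assumes q: "q \<noteq> 0" and Y: "recur p q Y" and W: "recur p q W"
    and h0: "Y 0 = W 0" and h1: "Y 1 = W 1"
  shows "Y n = W n"
proof -
  have f: "Y (int k) = W (int k) \<and> Y (int k + 1) = W (int k + 1)" for k
  proof (induction k)
    case 0 then show ?case using h0 h1 by simp
  next
    case (Suc k)
    have "Y (int k + 2) = W (int k + 2)"
      using Y W Suc unfolding recur_def by metis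
    moreover have "int (Suc k) = int k + 1" "int (Suc k) + 1 = int k + 2" by auto
    ultimately show ?case using Suc by metis
  qed
  have b: "Y (- int k) = W (- int k) \<and> Y (- int k + 1) = W (- int k + 1)" for k
  proof (induction k)
    case 0 then show ?case using h0 h1 by simp
  next
    case (Suc k)
    let ?m = "- int (Suc k)"
    have "Y (?m + 2) = p * Y (?m + 1) + q * Y ?m" "W (?m + 2) = p * W (?m + 1) + q * W ?m"
      using Y W unfolding recur_def by blast+
    moreover have "?m + 2 = - int k + 1" "?m + 1 = - int k" by auto
    ultimately have "q * Y ?m = q * W ?m" using Suc by auto
    then have "Y ?m = W ?m" using q by simp
    then show ?case using Suc by simp
  qed
  show ?thesis
  proof (cases "n \<ge> 0")
    case True then show ?thesis using f by (metis nonneg_eq_int)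
  next
    case False then obtain k where "n = - int k" by (intro that[of "nat (-n)"]) simp
    then show ?thesis using b by simp
  qed
qed

lemma fwd_pos:
  assumes "p > 0" "q > 0"
  shows "fwd_seq p q 0 1 n \<ge> 0 \<and> fwd_seq p q 0 1 (Suc n) > 0"
proof (induction n)
  case 0 then show ?case by simp
next
  case (Suc n)
  then show ?case using assms
    by (simp add: add_pos_nonneg)
qed

lemma bwd_alt:
  assumes "p > 0" "q > 0"
  shows "bwd_seq p q 0 1 n * bwd_seq p q 0 1 (Suc n) \<le> 0 \<and> bwd_seq p q 0 1 (Suc n) \<noteq> 0"
proof (induction n)
  case 0 then show ?case using assms by simp
next
  case (Suc n)
  let ?a = "bwd_seq p q 0 1 n" and ?b = "bwd_seq p q 0 1 (Suc n)"
  have e: "bwd_seq p q 0 1 (Suc (Suc n)) = (?a - p * ?b) / q" by simp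
  have "?b * (?a - p * ?b) < 0"
  proof -
    have "?b \<noteq> 0" using Suc by simp
    then have "?b * ?b > 0" by (cases "?b > 0") (auto simp: mult_neg_neg)
    then have "p * (?b * ?b) > 0" using assms by simp
    then show ?thesis using Suc by (simp add: algebra_simps)
  qed
  then have "?b * ((?a - p * ?b) / q) < 0" using assms
    by (simp add: mult_neg_pos divide_neg_pos times_divide_eq_right)
  then show ?case unfolding e by auto
qed

lemma U_nonzero:
  assumes "p > 0" "q > 0" "j \<noteq> 0"
  shows "lin_seq p q 0 1 j \<noteq> 0"
proof (cases "j > 0")
  case True
  then obtain k where "j = int (Suc k)" by (intro that[of "nat j - 1"]) simp
  moreover from this have "nat j = Suc k" by simp
  ultimately show ?thesis using fwd_pos[OF assms(1,2), of k] by (simp add: lin_seq_def)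
next
  case False
  then obtain k where "j = - int (Suc k)" using assms(3)
    by (intro that[of "nat (-j) - 1"]) simp
  moreover from this have "nat (-j) = Suc k" by simp
  ultimately show ?thesis using bwd_alt[OF assms(1,2), of k] by (simp add: lin_seq_def)
qed

lemma vanish:
  assumes p: "p > 0" and q: "q > 0" and Y: "recur p q Y"
    and d: "Y d = 0" and e: "Y e = 0" and de: "d \<noteq> e"
  shows "Y n = 0"
proof -
  define Z where "Z n = Y (n + d)" for n
  define U where "U = lin_seq p q 0 1"
  have RZ: "recur p q Z" using Y unfolding recur_def Z_def by (metis add.commute add.left_commute)
  have RU: "recur p q U" using lin_seq_recur q unfolding U_def by simp
  have RW: "recur p q (\<lambda>n. Z 1 * U n)" using RU unfolding recur_def by (simp add: algebra_simps)
  have U0: "U 0 = 0" and U1: "U 1 = 1" unfolding U_def lin_seq_def by auto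
  have ZW: "Z n = Z 1 * U n" for n
    by (rule recur_unique[OF _ RZ RW]) (use q d U0 U1 Z_def in auto)
  have "Z (e - d) = 0" using e unfolding Z_def by simp
  moreover have "U (e - d) \<noteq> 0" unfolding U_def using U_nonzero p q de by simp
  ultimately have "Z 1 = 0" using ZW[of "e-d"] by simp
  then have "Z (n - d) = 0" using ZW[of "n - d"] by simp
  then show ?thesis unfolding Z_def by simp
qed

lemma divrel:
  fixes x y1 y2 y3 A B :: real
  assumes "x \<noteq> 0" "x * y1 + A * y2 = B * y3"
  shows "y1 + (A / x) * y2 = (B / x) * y3"
  using assms by (simp add: field_simps)

lemma binom_shift:
  fixes Y :: "int \<Rightarrow> real"
  assumes R: "\<And>n. Y (n + \<alpha>) + t * Y (n + \<beta>) = s * Y n"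
  shows "(\<Sum>r = 0..k. real (k choose r) * t ^ r * Y (n + \<alpha> * int k + (\<beta> - \<alpha>) * int r)) = s ^ k * Y n"
proof (induction k arbitrary: n)
  case 0 then show ?case by simp
next
  case (Suc k)
  have R': "s ^ Suc k * Y n = s ^ k * Y (n + \<alpha>) + t * (s ^ k * Y (n + \<beta>))"
  proof -
    have "s ^ Suc k * Y n = s ^ k * (s * Y n)" by simp
    also have "\<dots> = s ^ k * (Y (n + \<alpha>) + t * Y (n + \<beta>))" using R[of n] by simp
    finally show ?thesis by (simp add: algebra_simps)
  qed
  define g where "g i = Y (n + \<alpha> + \<alpha> * int k + (\<beta> - \<alpha>) * int i)" for i
  have gs: "Y (n + \<alpha> * int (Suc k) + (\<beta> - \<alpha>) * int r) = g r" for r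
    unfolding g_def by (simp add: algebra_simps)
  have "(\<Sum>r = 0..Suc k. real (Suc k choose r) * t ^ r * Y (n + \<alpha> * int (Suc k) + (\<beta> - \<alpha>) * int r))
      = (\<Sum>r \<le> Suc k. real (Suc k choose r) * t ^ r * g r)"
    by (simp only: gs atLeast0AtMost)
  also have "\<dots> = g 0 + (\<Sum>i \<le> k. real (Suc k choose Suc i) * t ^ Suc i * g (Suc i))"
    by (subst sum.atMost_Suc_shift) simp
  also have "\<dots> = g 0 + (\<Sum>i \<le> k. real (k choose Suc i) * t ^ Suc i * g (Suc i))
       + (\<Sum>i \<le> k. real (k choose i) * t ^ Suc i * g (Suc i))"
    by (simp add: sum.distrib algebra_simps)
  also have "g 0 + (\<Sum>i \<le> k. real (k choose Suc i) * t ^ Suc i * g (Suc i))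
       = (\<Sum>i \<le> Suc k. real (k choose i) * t ^ i * g i)"
    by (subst sum.atMost_Suc_shift) simp
  also have "\<dots> = (\<Sum>i \<le> k. real (k choose i) * t ^ i * g i)"
    by simp
  also have "\<dots> = s ^ k * Y (n + \<alpha>)"
    using Suc.IH[of "n + \<alpha>"] unfolding g_def by (simp add: atLeast0AtMost algebra_simps)
  also have "(\<Sum>i \<le> k. real (k choose i) * t ^ Suc i * g (Suc i))
      = t * (\<Sum>i \<le> k. real (k choose i) * t ^ i * Y (n + \<beta> + \<alpha> * int k + (\<beta> - \<alpha>) * int i))"
    unfolding g_def by (simp add: sum_distrib_left algebra_simps)
  also have "\<dots> = t * (s ^ k * Y (n + \<beta>))"
    using Suc.IH[of "n + \<beta>"] by (simp add: atLeast0AtMost)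
  finally show ?case using R' by simp
qed

theorem theorem6:
  fixes X :: "int \<Rightarrow> real" and a b c d e m :: int and k :: nat
  assumes "X \<in> {Fib, Luc, Jac, JacL, Pell, PellL}"
  defines "\<Delta> \<equiv> X (d - a) * X (e - b) - X (e - a) * X (d - b)"
      and "\<Delta>1 \<equiv> X (d - c) * X (e - b) - X (e - c) * X (d - b)"
      and "\<Delta>2 \<equiv> X (d - a) * X (e - c) - X (e - a) * X (d - c)"
  shows "(\<Delta>2 \<noteq> 0 \<longrightarrow>
           (\<Sum>r = 0..k. real (k choose r) * (\<Delta>1 / \<Delta>2) ^ r
               * X (m - (b - c) * int k + (b - a) * int r)) = (\<Delta> / \<Delta>2) ^ k * X m
         \<and> (\<Sum>r = 0..k. real (k choose r) * (- \<Delta> / \<Delta>2) ^ r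
               * X (m + (a - b) * int k + (b - c) * int r)) = (\<Delta>1 / (- \<Delta>2)) ^ k * X m)
       \<and> (\<Delta>1 \<noteq> 0 \<longrightarrow>
           (\<Sum>r = 0..k. real (k choose r) * (- \<Delta> / \<Delta>1) ^ r
               * X (m + (b - a) * int k + (a - c) * int r)) = (\<Delta>2 / (- \<Delta>1)) ^ k * X m)"
proof -
  obtain p q x0 x1 where pq: "p > 0" "q > 0" and X: "X = lin_seq p q x0 x1"
    using assms(1) unfolding Fib_def Luc_def Jac_def JacL_def Pell_def PellL_def
    by (auto intro: that[of 1 1] that[of 1 2] that[of 2 1])
  have RX: "recur p q X" using X lin_seq_recur pq by simp
  define L where "L n = \<Delta>1 * X (n - a) + \<Delta>2 * X (n - b) - \<Delta> * X (n - c)" for n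
  have h: "X (n + 2 - x) = p * X (n + 1 - x) + q * X (n - x)" for n x
  proof -
    have "X ((n-x)+2) = p*X((n-x)+1) + q*X(n-x)" using RX unfolding recur_def by blast
    moreover have "(n-x)+2 = n+2-x" "(n-x)+1 = n+1-x" by auto
    ultimately show ?thesis by simp
  qed
  have RL: "recur p q L" unfolding recur_def L_def
    by (simp add: h algebra_simps)
  have Ld: "L d = 0" unfolding L_def \<Delta>_def \<Delta>1_def \<Delta>2_def by (simp add: algebra_simps)
  have Le: "L e = 0" unfolding L_def \<Delta>_def \<Delta>1_def \<Delta>2_def by (simp add: algebra_simps)
  have key: "\<Delta>1 * X (n - a) + \<Delta>2 * X (n - b) = \<Delta> * X (n - c)" if nz: "\<Delta>1 \<noteq> 0 \<or> \<Delta>2 \<noteq> 0" for n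
  proof -
    have "d \<noteq> e" using nz unfolding \<Delta>1_def \<Delta>2_def by auto
    then have "L n = 0" using vanish[OF pq RL Ld Le] by simp
    then show ?thesis unfolding L_def by simp
  qed
  have S1: "(\<Sum>r = 0..k. real (k choose r) * (\<Delta>1 / \<Delta>2) ^ r
               * X (m - (b - c) * int k + (b - a) * int r)) = (\<Delta> / \<Delta>2) ^ k * X m"
    if h: "\<Delta>2 \<noteq> 0"
  proof -
    have R: "X (n + (c - b)) + (\<Delta>1 / \<Delta>2) * X (n + (c - a)) = (\<Delta> / \<Delta>2) * X n" for n
    proof -
      have K0: "\<Delta>1 * X (n + c - a) + \<Delta>2 * X (n + c - b) = \<Delta> * X (n + c - c)" using key[of "n + c"] h by blast
      have e1: "n + c - a = n + (c - a)" "n + c - b = n + (c - b)" "n + c - c = n" by simp_all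
      have K: "\<Delta>2 * X (n + (c - b)) + \<Delta>1 * X (n + (c - a)) = \<Delta> * X n" using K0 unfolding e1 by linarith
      show ?thesis using divrel[OF h K] .
    qed
    have ee: "m + (c - b) * int k + ((c - a) - (c - b)) * int r = m - (b - c) * int k + (b - a) * int r" for r
      by (simp add: algebra_simps)
    show ?thesis using binom_shift[OF R, of k m] by (simp only: ee)
  qed
  have S2: "(\<Sum>r = 0..k. real (k choose r) * (- \<Delta> / \<Delta>2) ^ r
               * X (m + (a - b) * int k + (b - c) * int r)) = (\<Delta>1 / (- \<Delta>2)) ^ k * X m"
    if h: "\<Delta>2 \<noteq> 0"
  proof -
    have R: "X (n + (a - b)) + (- \<Delta> / \<Delta>2) * X (n + (a - c)) = (\<Delta>1 / (- \<Delta>2)) * X n" for n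
    proof -
      have K0: "\<Delta>1 * X (n + a - a) + \<Delta>2 * X (n + a - b) = \<Delta> * X (n + a - c)" using key[of "n + a"] h by blast
      have e1: "n + a - c = n + (a - c)" "n + a - b = n + (a - b)" "n + a - a = n" by simp_all
      have K: "\<Delta>2 * X (n + (a - b)) + (- \<Delta>) * X (n + (a - c)) = (- \<Delta>1) * X n" using K0 unfolding e1 by linarith
      show ?thesis using divrel[OF h K] by simp
    qed
    have ee: "m + (a - b) * int k + ((a - c) - (a - b)) * int r = m + (a - b) * int k + (b - c) * int r" for r
      by (simp add: algebra_simps)
    show ?thesis using binom_shift[OF R, of k m] by (simp only: ee)
  qed
  have S3: "(\<Sum>r = 0..k. real (k choose r) * (- \<Delta> / \<Delta>1) ^ r
               * X (m + (b - a) * int k + (a - c) * int r)) = (\<Delta>2 / (- \<Delta>1)) ^ k * X m"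
    if h: "\<Delta>1 \<noteq> 0"
  proof -
    have R: "X (n + (b - a)) + (- \<Delta> / \<Delta>1) * X (n + (b - c)) = (\<Delta>2 / (- \<Delta>1)) * X n" for n
    proof -
      have K0: "\<Delta>1 * X (n + b - a) + \<Delta>2 * X (n + b - b) = \<Delta> * X (n + b - c)" using key[of "n + b"] h by blast
      have e1: "n + b - c = n + (b - c)" "n + b - a = n + (b - a)" "n + b - b = n" by simp_all
      have K: "\<Delta>1 * X (n + (b - a)) + (- \<Delta>) * X (n + (b - c)) = (- \<Delta>2) * X n" using K0 unfolding e1 by linarith
      show ?thesis using divrel[OF h K] by simp
    qed
    have ee: "m + (b - a) * int k + ((b - c) - (b - a)) * int r = m + (b - a) * int k + (a - c) * int r" for r
      by (simp add: algebra_simps)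
    show ?thesis using binom_shift[OF R, of k m] by (simp only: ee)
  qed
  show ?thesis using S1 S2 S3 by blast
qed

end
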